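(* Consider the averaged buck converter $-L\dot I=V-uV_s$, $C\dot V=I-GV$ with scalar constants $L>0$, $C>0$, $G\ge0$, $V_s\in\mathbb{R}$, extended by $\dot u=\upsilon$ (state $(I,V,\dot I,\dot V,u)$, input $\upsilon$). Then this system is passive with respect to the storage function $S=\tfrac12L\dot I^2+\tfrac12C\dot V^2$ and the port-variables $\dot u$ and $\dot IV_s$, i.e. $\dot S\le\dot u\,\dot IV_s$.
   Context: $I$ is the inductor current, $V$ the capacitor voltage, $u\in[0,1]$ the duty cycle (averaged model). *)

theory Defs
  imports "HOL-Analysis.Analysis"
begin

end

theory Submission
  imports Defs
begin

theorem lemma2:
  fixes L C G Vs :: real
    and I V u dI dV \<upsilon> :: "real \<Rightarrow> real"
  assumes "L > 0" and "C > 0" and "G \<ge> 0"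
    and I_deriv: "\<And>t. (I has_real_derivative dI t) (at t)"
    and V_deriv: "\<And>t. (V has_real_derivative dV t) (at t)"
    and u_deriv: "\<And>t. (u has_real_derivative \<upsilon> t) (at t)"
    and dI_diff: "\<And>t. dI differentiable (at t)"
    and dV_diff: "\<And>t. dV differentiable (at t)"
    and eqI: "\<And>t. - L * dI t = V t - u t * Vs"
    and eqV: "\<And>t. C * dV t = I t - G * V t"
  shows "(\<forall>t. (\<lambda>s. L * (dI s)\<^sup>2 / 2 + C * (dV s)\<^sup>2 / 2) differentiable (at t))
       \<and> (\<forall>t. deriv (\<lambda>s. L * (dI s)\<^sup>2 / 2 + C * (dV s)\<^sup>2 / 2) t
                \<le> \<upsilon> t * (dI t * Vs))"
proof -
  have fI: "dI = (\<lambda>s. (u s * Vs - V s) / L)"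
  proof (rule ext)
    fix s
    have "L * dI s = u s * Vs - V s" using eqI[of s] by linarith
    then show "dI s = (u s * Vs - V s) / L" using \<open>L > 0\<close> by (simp add: field_simps)
  qed
  have fV: "dV = (\<lambda>s. (I s - G * V s) / C)"
    using eqV \<open>C > 0\<close> by (intro ext) (simp add: field_simps)
  have dI': "(dI has_real_derivative (\<upsilon> t * Vs - dV t) / L) (at t)" for t
  proof -
    have "((\<lambda>s. (u s * Vs - V s) / L) has_real_derivative (\<upsilon> t * Vs - dV t) / L) (at t)"
      using \<open>L > 0\<close> by (auto intro!: derivative_eq_intros u_deriv V_deriv simp: field_simps)
    then show ?thesis by (simp only: fI[symmetric])
  qed
  have dV': "(dV has_real_derivative (dI t - G * dV t) / C) (at t)" for t
  proof -
    have "((\<lambda>s. (I s - G * V s) / C) has_real_derivative (dI t - G * dV t) / C) (at t)"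
      using \<open>C > 0\<close> by (auto intro!: derivative_eq_intros I_deriv V_deriv simp: field_simps)
    then show ?thesis by (simp only: fV[symmetric])
  qed
  have S: "((\<lambda>s. L * (dI s)\<^sup>2 / 2 + C * (dV s)\<^sup>2 / 2) has_real_derivative
      dI t * (\<upsilon> t * Vs - dV t) + dV t * (dI t - G * dV t)) (at t)" for t
    using \<open>L > 0\<close> \<open>C > 0\<close>
    by (auto intro!: derivative_eq_intros dI' dV' simp: field_simps power2_eq_square)
  show ?thesis
  proof (intro conjI allI)
    fix t
    show "(\<lambda>s. L * (dI s)\<^sup>2 / 2 + C * (dV s)\<^sup>2 / 2) differentiable (at t)"
      using S real_differentiable_def by blast
    have "deriv (\<lambda>s. L * (dI s)\<^sup>2 / 2 + C * (dV s)\<^sup>2 / 2) t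
        = dI t * (\<upsilon> t * Vs - dV t) + dV t * (dI t - G * dV t)"
      using S DERIV_imp_deriv by blast
    also have "\<dots> = \<upsilon> t * (dI t * Vs) - G * (dV t)\<^sup>2"
      by (simp add: algebra_simps power2_eq_square)
    also have "\<dots> \<le> \<upsilon> t * (dI t * Vs)" using \<open>G \<ge> 0\<close> by simp
    finally show "deriv (\<lambda>s. L * (dI s)\<^sup>2 / 2 + C * (dV s)\<^sup>2 / 2) t \<le> \<upsilon> t * (dI t * Vs)" .
  qed
qed

end
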